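(* Let $G$ be a graph. If some graph in the LC orbit $[G]$ contains a clique of size $k\ge 1$, then $\lambda(G)\ge k-1$. Equivalently, every graph in $[G]$ has clique number at most $\lambda(G)+1$.
   Context: All graphs are finite, simple and undirected. For a graph $G=(V,E)$ and $v\in V$, let $N_v$ be the neighbourhood of $v$; the local complementation $G^v$ is obtained by complementing the subgraph induced on $N_v$. The LC orbit $[G]$ is the set of graphs obtainable from $G$ by finite sequences of local complementations. $\alpha(G)$ is the independence number of $G$ and $\lambda(G)=\max_{H\in[G]}\alpha(H)$. *)

theory Defs
  imports Main
begin

definition simple_graph :: "'a set \<Rightarrow> ('a \<Rightarrow> 'a \<Rightarrow> bool) \<Rightarrow> bool" where
  "simple_graph V E \<longleftrightarrow> finite V \<and> (\<forall>x y. E x y \<longrightarrow> E y x) \<and> (\<forall>x. \<not> E x x)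
     \<and> (\<forall>x y. E x y \<longrightarrow> x \<in> V \<and> y \<in> V)"

definition nbhd :: "('a \<Rightarrow> 'a \<Rightarrow> bool) \<Rightarrow> 'a \<Rightarrow> 'a set" where
  "nbhd E v = {x. E v x}"

definition local_compl :: "('a \<Rightarrow> 'a \<Rightarrow> bool) \<Rightarrow> 'a \<Rightarrow> ('a \<Rightarrow> 'a \<Rightarrow> bool)" where
  "local_compl E v = (\<lambda>x y. if x \<in> nbhd E v \<and> y \<in> nbhd E v \<and> x \<noteq> y then \<not> E x y else E x y)"

inductive_set lc_orbit :: "'a set \<Rightarrow> ('a \<Rightarrow> 'a \<Rightarrow> bool) \<Rightarrow> ('a \<Rightarrow> 'a \<Rightarrow> bool) set"
  for V :: "'a set" and E :: "'a \<Rightarrow> 'a \<Rightarrow> bool" where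
  base: "E \<in> lc_orbit V E"
| step: "H \<in> lc_orbit V E \<Longrightarrow> v \<in> V \<Longrightarrow> local_compl H v \<in> lc_orbit V E"

definition independent_set :: "'a set \<Rightarrow> ('a \<Rightarrow> 'a \<Rightarrow> bool) \<Rightarrow> 'a set \<Rightarrow> bool" where
  "independent_set V E S \<longleftrightarrow> S \<subseteq> V \<and> (\<forall>x\<in>S. \<forall>y\<in>S. \<not> E x y)"

definition clique :: "'a set \<Rightarrow> ('a \<Rightarrow> 'a \<Rightarrow> bool) \<Rightarrow> 'a set \<Rightarrow> bool" where
  "clique V E S \<longleftrightarrow> S \<subseteq> V \<and> (\<forall>x\<in>S. \<forall>y\<in>S. x \<noteq> y \<longrightarrow> E x y)"

definition indep_number :: "'a set \<Rightarrow> ('a \<Rightarrow> 'a \<Rightarrow> bool) \<Rightarrow> nat" where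
  "indep_number V E = Max (card ` {S. independent_set V E S})"

definition lc_lambda :: "'a set \<Rightarrow> ('a \<Rightarrow> 'a \<Rightarrow> bool) \<Rightarrow> nat" where
  "lc_lambda V E = Max (indep_number V ` lc_orbit V E)"

end

theory Submission
  imports Defs
begin

lemma orbit_sub:
  assumes "H \<in> lc_orbit V E" "simple_graph V E"
  shows "(\<forall>x y. H x y \<longrightarrow> x \<in> V \<and> y \<in> V) \<and> (\<forall>x. \<not> H x x)"
  using assms
proof (induction rule: lc_orbit.induct)
  case base
  then show ?case by (simp add: simple_graph_def)
next
  case (step H v)
  then show ?case unfolding local_compl_def nbhd_def by (auto split: if_splits)
qed

lemma finite_rels:
  assumes "finite V"
  shows "finite {H :: 'a \<Rightarrow> 'a \<Rightarrow> bool. \<forall>x y. H x y \<longrightarrow> x \<in> V \<and> y \<in> V}"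
proof -
  have "{H :: 'a \<Rightarrow> 'a \<Rightarrow> bool. \<forall>x y. H x y \<longrightarrow> x \<in> V \<and> y \<in> V}
        \<subseteq> (\<lambda>R x y. (x,y) \<in> R) ` Pow (V \<times> V)"
  proof
    fix H :: "'a \<Rightarrow> 'a \<Rightarrow> bool"
    assume "H \<in> {H. \<forall>x y. H x y \<longrightarrow> x \<in> V \<and> y \<in> V}"
    then have "{(x,y). H x y} \<in> Pow (V \<times> V)" by auto
    moreover have "H = (\<lambda>x y. (x,y) \<in> {(x,y). H x y})" by auto
    ultimately show "H \<in> (\<lambda>R x y. (x,y) \<in> R) ` Pow (V \<times> V)" by blast
  qed
  then show ?thesis using assms by (meson finite_Pow_iff finite_SigmaI finite_imageI finite_subset)
qed

theorem mainTheorem3: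
  fixes V :: "'a set" and E H :: "'a \<Rightarrow> 'a \<Rightarrow> bool" and S :: "'a set" and k :: nat
  assumes "simple_graph V E"
    and "H \<in> lc_orbit V E"
    and "clique V H S" and "card S = k" and "k \<ge> 1"
  shows "lc_lambda V E \<ge> k - 1"
proof -
  have fin: "finite V" using assms(1) by (simp add: simple_graph_def)
  from assms(4,5) have "S \<noteq> {}" by auto
  then obtain v where v: "v \<in> S" by auto
  have SV: "S \<subseteq> V" using assms(3) by (simp add: clique_def)
  have fS: "finite S" using SV fin finite_subset by blast
  define H' where "H' = local_compl H v"
  have H'o: "H' \<in> lc_orbit V E" unfolding H'_def using assms(2) v SV by (auto intro: lc_orbit.step)
  have ind: "independent_set V H' (S - {v})"
    unfolding independent_set_def H'_def local_compl_def nbhd_def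
    using assms(3) SV v orbit_sub[OF assms(2,1)] unfolding clique_def by auto
  have cS: "card (S - {v}) = k - 1" using assms(4) v fS by simp
  have "finite {T. independent_set V H' T}"
    by (rule finite_subset[of _ "Pow V"]) (auto simp: independent_set_def fin)
  then have "k - 1 \<le> indep_number V H'"
    unfolding indep_number_def using ind cS
    by (metis (no_types, lifting) Max_ge finite_imageI image_eqI mem_Collect_eq)
  moreover have "finite (lc_orbit V E)"
  proof (rule finite_subset[OF _ finite_rels[OF fin]])
    show "lc_orbit V E \<subseteq> {H. \<forall>x y. H x y \<longrightarrow> x \<in> V \<and> y \<in> V}"
      using orbit_sub[OF _ assms(1)] by blast
  qed
  then have "indep_number V H' \<le> lc_lambda V E"
    unfolding lc_lambda_def using H'o by simp
  ultimately show ?thesis by simp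
qed

end
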